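(* Let $\mathcal I=\{x_0,x_1,x_2,\ldots\}$ be the standard infinite generating set of Thompson's group $F$ and let $T_1,T_2$ be finite rooted binary trees each with $n$ nodes. Then $d_{RA}(T_1,T_2)=|(T_1,T_2)|_{\mathcal I}$, where $|(T_1,T_2)|_{\mathcal I}$ is the word length, with respect to $\mathcal I$, of the element of $F$ represented by the tree pair diagram $(T_1,T_2)$.
   Context: Trees: finite rooted binary trees, each internal vertex (node) having a left and a right child; a tree with $n$ nodes has $n+1$ leaves numbered $0,\ldots,n$ from left to right. The right arm consists of the root and all nodes reachable from it by right edges only. Right rotation at a node $N$ whose left child $M$ is a node (with $A,B$ the subtrees of $M$, $C$ the right subtree of $N$) replaces the subtree at $N$ by one whose root has left subtree $A$ and right child a node with subtrees $B,C$; left rotation is the inverse. The right-arm rotation distance $d_{RA}(T_1,T_2)$ is the minimal number of rotations, each performed at a node on the right arm, needed to transform $T_1$ into $T_2$. Thompson's group $F=\langle x_0,x_1,\ldots\mid x_i^{-1}x_nx_i=x_{n+1}\ (i<n)\rangle$. The leaf exponent of leaf $k$ in a tree is the length of the longest upward path of left edges from leaf $k$ none of whose vertices lies on the right arm. The tree pair diagram $(T_1,T_2)$ represents the element of $F$ given by the word $x_0^{f_0}\cdots x_n^{f_n}x_n^{-e_n}\cdots x_0^{-e_0}$, where $e_i$, $f_i$ are the leaf exponents of leaf $i$ in $T_1$, $T_2$. Word length with respect to a generating set is the length of a shortest word in the generators and their inverses representing the element. *)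

theory Defs
  imports Main
begin

datatype tree = Leaf | Node tree tree

fun nodes :: "tree \<Rightarrow> nat" where
  "nodes Leaf = 0"
| "nodes (Node l r) = Suc (nodes l + nodes r)"

inductive ra_step :: "tree \<Rightarrow> tree \<Rightarrow> bool" where
  rot_right: "ra_step (Node (Node A B) C) (Node A (Node B C))"
| rot_left:  "ra_step (Node A (Node B C)) (Node (Node A B) C)"
| down_right: "ra_step t t' \<Longrightarrow> ra_step (Node L t) (Node L t')"

definition d_RA :: "tree \<Rightarrow> tree \<Rightarrow> nat" where
  "d_RA T1 T2 = (LEAST m. (ra_step ^^ m) T1 T2)"

text \<open>For a subtree, the list (leaves left to right) of lengths of the maximal
  upward paths of left edges from each leaf that stay inside the subtree.\<close>
fun left_paths :: "tree \<Rightarrow> nat list" where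
  "left_paths Leaf = [0]"
| "left_paths (Node l r) =
     (let ps = left_paths l in (Suc (hd ps)) # tl ps) @ left_paths r"

text \<open>Leaf exponents of a whole tree: paths may not contain a vertex of the
  right arm, so the left subtrees hanging off the right arm are treated
  separately; the rightmost leaf has exponent 0.\<close>
fun leaf_exps :: "tree \<Rightarrow> nat list" where
  "leaf_exps Leaf = [0]"
| "leaf_exps (Node l r) = left_paths l @ leaf_exps r"

text \<open>Letters: (i, True) is x_i, (i, False) is x_i inverse.\<close>
type_synonym letter = "nat \<times> bool"

definition relator :: "nat \<Rightarrow> nat \<Rightarrow> letter list" where
  "relator i n = [(i, False), (n, True), (i, True), (Suc n, False)]"

text \<open>Two words represent the same element of
  F = < x_0, x_1, ... | x_i^-1 x_n x_i = x_(n+1) (i < n) >.\<close>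
inductive F_eq :: "letter list \<Rightarrow> letter list \<Rightarrow> bool" where
  F_refl: "F_eq w w"
| F_sym: "F_eq u w \<Longrightarrow> F_eq w u"
| F_trans: "F_eq u v \<Longrightarrow> F_eq v w \<Longrightarrow> F_eq u w"
| F_free: "F_eq (u @ [(i, b), (i, \<not> b)] @ v) (u @ v)"
| F_rel: "i < n \<Longrightarrow> F_eq (u @ relator i n @ v) (u @ v)"

definition F_length :: "letter list \<Rightarrow> nat" where
  "F_length w = (LEAST k. \<exists>u. F_eq u w \<and> length u = k)"

definition tp_word :: "tree \<Rightarrow> tree \<Rightarrow> letter list" where
  "tp_word T1 T2 =
     (let e = leaf_exps T1; f = leaf_exps T2; n = nodes T1 in
      concat (map (\<lambda>i. replicate (f ! i) (i, True)) [0..<Suc n]) @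
      concat (map (\<lambda>i. replicate (e ! i) (i, False)) (rev [0..<Suc n])))"

end

theory Submission
  imports Defs
begin


definition lflip :: "letter \<Rightarrow> letter" where "lflip l = (fst l, \<not> snd l)"
definition winv :: "letter list \<Rightarrow> letter list" where "winv u = rev (map lflip u)"

lemma lflip_lflip[simp]: "lflip (lflip l) = l" by (simp add: lflip_def)
lemma winv_simps[simp]: "winv [] = []" "winv (l # u) = winv u @ [lflip l]"
  "winv (u @ v) = winv v @ winv u" "winv (winv u) = u"
  by (simp_all add: winv_def rev_map comp_def)

lemma F_cong: "F_eq u v \<Longrightarrow> F_eq (pr @ u @ su) (pr @ v @ su)"
proof (induction rule: F_eq.induct)
  case (F_refl w) then show ?case by (rule F_eq.F_refl)
next
  case (F_sym u w) then show ?case by (blast intro: F_eq.F_sym)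
next
  case (F_trans u v w) then show ?case by (blast intro: F_eq.F_trans)
next
  case (F_free u i b v)
  have "F_eq ((pr @ u) @ [(i, b), (i, \<not> b)] @ (v @ su)) ((pr @ u) @ (v @ su))" by (rule F_eq.F_free)
  then show ?case by simp
next
  case (F_rel i n u v)
  have "F_eq ((pr @ u) @ relator i n @ (v @ su)) ((pr @ u) @ (v @ su))" using F_rel by (rule F_eq.F_rel)
  then show ?case by simp
qed

lemma F_trans': "F_eq u v \<Longrightarrow> F_eq v w \<Longrightarrow> F_eq u w" by (rule F_eq.F_trans)
lemma F_sym': "F_eq u v \<Longrightarrow> F_eq v u" by (rule F_eq.F_sym)

lemma F_app: "F_eq u u' \<Longrightarrow> F_eq v v' \<Longrightarrow> F_eq (u @ v) (u' @ v')"
proof -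
  assume a: "F_eq u u'" "F_eq v v'"
  have "F_eq ([] @ u @ v) ([] @ u' @ v)" using F_cong[OF a(1)] by blast
  moreover have "F_eq (u' @ v @ []) (u' @ v' @ [])" using F_cong[OF a(2)] by blast
  ultimately show ?thesis by (auto intro: F_trans')
qed

lemma F_app_l: "F_eq v v' \<Longrightarrow> F_eq (u @ v) (u @ v')" by (rule F_app[OF F_eq.F_refl])
lemma F_app_r: "F_eq u u' \<Longrightarrow> F_eq (u @ v) (u' @ v)" by (rule F_app[OF _ F_eq.F_refl])
lemma F_cons: "F_eq v v' \<Longrightarrow> F_eq (l # v) (l # v')" using F_app_l[of v v' "[l]"] by simp

lemma F_cancel1: "F_eq (l # lflip l # v) v"
  using F_eq.F_free[of "[]" "fst l" "snd l" v] by (simp add: lflip_def)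
lemma F_cancel2: "F_eq (lflip l # l # v) v"
  using F_cancel1[of "lflip l" v] by simp

lemma F_inv_r: "F_eq (u @ winv u) []"
proof (induction u)
  case Nil then show ?case by (simp add: F_eq.F_refl)
next
  case (Cons l u)
  have "F_eq (l # (u @ winv u) @ [lflip l]) (l # [] @ [lflip l])"
    using F_cong[OF Cons, of "[l]" "[lflip l]"] by simp
  then have "F_eq ((l # u) @ winv (l # u)) [l, lflip l]" by simp
  moreover have "F_eq [l, lflip l] []" using F_cancel1[of l "[]"] by simp
  ultimately show ?case by (rule F_trans')
qed

lemma F_inv_l: "F_eq (winv u @ u) []"
  using F_inv_r[of "winv u"] by simp

lemma F_cons_cancel: "F_eq (l # u) v \<Longrightarrow> F_eq u (lflip l # v)"
proof -
  assume a: "F_eq (l # u) v"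
  have "F_eq u (lflip l # l # u)" by (rule F_sym'[OF F_cancel2])
  moreover have "F_eq (lflip l # l # u) (lflip l # v)" using F_cons[OF a] .
  ultimately show ?thesis by (rule F_trans')
qed

lemma F_comm: "i < c \<Longrightarrow> F_eq [(c,True),(i,True)] [(i,True),(Suc c,True)]"
proof -
  assume ic: "i < c"
  have "F_eq ([(i,True)] @ relator i c @ [(Suc c,True)]) ([(i,True)] @ [(Suc c,True)])"
    using ic by (rule F_eq.F_rel)
  then have 1: "F_eq ((i,True) # (i,False) # (c,True) # (i,True) # (Suc c,False) # (Suc c,True) # [])
      [(i,True),(Suc c,True)]" by (simp add: relator_def)
  have 2: "F_eq ((i,True) # (i,False) # (c,True) # (i,True) # (Suc c,False) # (Suc c,True) # [])
      ((c,True) # (i,True) # (Suc c,False) # (Suc c,True) # [])"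
    using F_cancel1[of "(i,True)"] by (simp add: lflip_def)
  have 3: "F_eq ((c,True) # (i,True) # (Suc c,False) # (Suc c,True) # []) [(c,True),(i,True)]"
    using F_cong[OF F_cancel2[of "(Suc c,True)" "[]"], of "[(c,True),(i,True)]" "[]"] by (simp add: lflip_def)
  show ?thesis using 1 2 3 by (meson F_trans' F_sym')
qed

definition shw :: "nat \<Rightarrow> letter list \<Rightarrow> letter list" where
  "shw k0 u = map (\<lambda>(i,b). (i + k0, b)) u"

lemma shw_simps[simp]: "shw k0 [] = []" "shw k0 ((i,b) # u) = (i + k0, b) # shw k0 u"
  "shw k0 (u @ v) = shw k0 u @ shw k0 v"
  by (simp_all add: shw_def)

lemma F_shift: "F_eq u v \<Longrightarrow> F_eq (shw k0 u) (shw k0 v)"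
proof (induction rule: F_eq.induct)
  case (F_refl w) then show ?case by (rule F_eq.F_refl)
next
  case (F_sym u w) then show ?case by (blast intro: F_eq.F_sym)
next
  case (F_trans u v w) then show ?case by (blast intro: F_eq.F_trans)
next
  case (F_free u i b v)
  show ?case using F_eq.F_free[of "shw k0 u" "i + k0" b "shw k0 v"] by simp
next
  case (F_rel i n u v)
  have "i + k0 < n + k0" using F_rel by simp
  then have "F_eq (shw k0 u @ relator (i+k0) (n+k0) @ shw k0 v) (shw k0 u @ shw k0 v)" by (rule F_eq.F_rel)
  then show ?case by (simp add: relator_def)
qed



fun W :: "nat \<Rightarrow> nat list \<Rightarrow> letter list" where
  "W k0 [] = []"
| "W k0 (a # e) = replicate a (k0, True) @ W (Suc k0) e"

definition P :: "tree \<Rightarrow> letter list" where "P T = W 0 (leaf_exps T)"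

lemma W_append: "W k0 (e1 @ e2) = W k0 e1 @ W (k0 + length e1) e2"
  by (induction e1 arbitrary: k0) auto

lemma shw_replicate: "shw k (replicate a (j, b)) = replicate a (j + k, b)"
  by (induction a) auto

lemma W_shift: "W (j + k) e = shw k (W j e)"
proof (induction e arbitrary: j)
  case Nil then show ?case by simp
next
  case (Cons a e)
  have "W (Suc (j+k)) e = shw k (W (Suc j) e)" using Cons.IH[of "Suc j"] by simp
  then show ?case by (simp add: shw_replicate)
qed

lemma lp_facts: "length (left_paths t) = Suc (nodes t) \<and> sum_list (left_paths t) = nodes t"
proof (induction t)
  case Leaf then show ?case by simp
next
  case (Node l r)
  obtain h tl where h: "left_paths l = h # tl" using Node by (cases "left_paths l") auto
  show ?case using Node h by (simp add: Let_def)
qed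

lemma lp_ne: "left_paths t \<noteq> []" using lp_facts[of t] by auto

lemma le_length: "length (leaf_exps t) = Suc (nodes t)"
  by (induction t) (auto simp: lp_facts)

inductive rr :: "nat \<Rightarrow> tree \<Rightarrow> tree \<Rightarrow> bool" where
  rr0: "rr 0 (Node (Node A B) C) (Node A (Node B C))"
| rrS: "rr k t t' \<Longrightarrow> rr (Suc k) (Node L t) (Node L t')"

lemma rr_nodes: "rr k T T' \<Longrightarrow> nodes T' = nodes T"
  by (induction rule: rr.induct) auto

lemma ra_step_rr: "ra_step T T' \<Longrightarrow> (\<exists>k. rr k T T') \<or> (\<exists>k. rr k T' T)"
  by (induction rule: ra_step.induct) (auto intro: rr.intros)

lemma rr_ra_step: "rr k T T' \<Longrightarrow> ra_step T T'"
  by (induction rule: rr.induct) (auto intro: ra_step.intros)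

lemma rr_ra_step': "rr k T T' \<Longrightarrow> ra_step T' T"
  by (induction rule: rr.induct) (auto intro: ra_step.intros)

fun ok :: "nat \<Rightarrow> nat \<Rightarrow> nat list \<Rightarrow> bool" where
  "ok c k0 [] = True"
| "ok c k0 (a # e) = ((0 < a \<longrightarrow> k0 < c) \<and> ok (c + a) (Suc k0) e)"

lemma ok_append: "ok c k0 (e1 @ e2) = (ok c k0 e1 \<and> ok (c + sum_list e1) (k0 + length e1) e2)"
  by (induction e1 arbitrary: c k0) (auto simp: add.assoc)

lemma ok_lp: "k0 < c \<Longrightarrow> ok c k0 (left_paths t)"
proof (induction t arbitrary: c k0)
  case Leaf then show ?case by simp
next
  case (Node l r)
  obtain h tl where h: "left_paths l = h # tl" using lp_ne by (cases "left_paths l") auto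
  have f: "length tl = nodes l" "h + sum_list tl = nodes l" using lp_facts[of l] h by auto
  have "ok (Suc c) k0 (h # tl)" using Node.IH(1)[of k0 "Suc c"] Node.prems h by simp
  then have 1: "ok (Suc c + h) (Suc k0) tl" by simp
  have 2: "ok (c + Suc h + sum_list tl) (Suc k0 + length tl) (left_paths r)"
    using Node.IH(2) Node.prems f by simp
  show ?case using 1 2 Node.prems h by (simp add: ok_append Let_def)
qed

lemmas [trans] = F_trans'

lemma F_rep_push: "k0 < c \<Longrightarrow>
  F_eq ((c,True) # replicate a (k0,True)) (replicate a (k0,True) @ [(c+a,True)])"
proof (induction a arbitrary: c)
  case 0 then show ?case by (simp add: F_eq.F_refl)
next
  case (Suc a)
  have 1: "F_eq ((c,True) # (k0,True) # replicate a (k0,True)) ((k0,True) # (Suc c,True) # replicate a (k0,True))"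
    using F_app_r[OF F_comm[OF Suc.prems], of "replicate a (k0,True)"] by simp
  have 2: "F_eq ((k0,True) # (Suc c,True) # replicate a (k0,True)) ((k0,True) # replicate a (k0,True) @ [(Suc c + a,True)])"
    using F_cons[OF Suc.IH[of "Suc c"]] Suc.prems by simp
  show ?case using F_trans'[OF 1 2] by simp
qed

lemma F_W_push: "ok c k0 e \<Longrightarrow> F_eq ((c,True) # W k0 e) (W k0 e @ [(c + sum_list e, True)])"
proof (induction e arbitrary: c k0)
  case Nil then show ?case by (simp add: F_eq.F_refl)
next
  case (Cons a e)
  have 1: "F_eq ((c,True) # replicate a (k0,True)) (replicate a (k0,True) @ [(c+a,True)])"
  proof (cases "a = 0")
    case True then show ?thesis by (simp add: F_eq.F_refl)
  next
    case False then show ?thesis using Cons.prems by (intro F_rep_push) auto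
  qed
  have 2: "F_eq ((c+a,True) # W (Suc k0) e) (W (Suc k0) e @ [(c + a + sum_list e, True)])"
    using Cons by simp
  have "F_eq ((c,True) # replicate a (k0,True) @ W (Suc k0) e) ((replicate a (k0,True) @ [(c+a,True)]) @ W (Suc k0) e)"
    using F_app_r[OF 1] by simp
  also have "F_eq ((replicate a (k0,True) @ [(c+a,True)]) @ W (Suc k0) e) (replicate a (k0,True) @ (W (Suc k0) e @ [(c + a + sum_list e, True)]))"
    using F_app_l[OF 2, of "replicate a (k0,True)"] by simp
  finally show ?case by (simp add: add.assoc)
qed


lemma P_rot: "rr k T T' \<Longrightarrow> F_eq (P T) ((k,True) # P T')"
proof (induction rule: rr.induct)
  case (rr0 A B C)
  obtain h tl where h: "left_paths A = h # tl" using lp_ne by (cases "left_paths A") auto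
  show ?case by (simp add: P_def h Let_def W_append F_eq.F_refl)
next
  case (rrS k t t' L)
  let ?l = "length (left_paths L)"
  have 1: "F_eq (W ?l (leaf_exps t)) ((k + ?l, True) # W ?l (leaf_exps t'))"
    using F_shift[OF rrS.IH[unfolded P_def], of ?l] W_shift[of 0 ?l] by simp
  have "P (Node L t) = W 0 (left_paths L) @ W ?l (leaf_exps t)" by (simp add: P_def W_append)
  also have "F_eq \<dots> (W 0 (left_paths L) @ (k + ?l, True) # W ?l (leaf_exps t'))"
    using F_app_l[OF 1] .
  also have "F_eq \<dots> ((Suc k, True) # W 0 (left_paths L) @ W ?l (leaf_exps t'))"
  proof -
    have "F_eq ((Suc k, True) # W 0 (left_paths L)) (W 0 (left_paths L) @ [(Suc k + sum_list (left_paths L), True)])"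
      by (rule F_W_push[OF ok_lp]) simp
    then have "F_eq ((Suc k, True) # W 0 (left_paths L)) (W 0 (left_paths L) @ [(k + ?l, True)])"
      using lp_facts[of L] by simp
    from F_sym'[OF F_app_r[OF this, of "W ?l (leaf_exps t')"]] show ?thesis by simp
  qed
  also have "(Suc k, True) # W 0 (left_paths L) @ W ?l (leaf_exps t') = (Suc k, True) # P (Node L t')"
    by (simp add: P_def W_append)
  finally show ?case .
qed

lemma W_concat: "W k0 e = concat (map (\<lambda>i. replicate (e ! (i - k0)) (i, True)) [k0..<k0 + length e])"
proof (induction e arbitrary: k0)
  case Nil then show ?case by simp
next
  case (Cons a e)
  have "[k0..<k0 + length (a # e)] = k0 # [Suc k0..<Suc k0 + length e]" by (simp add: upt_rec)
  moreover have m: "map (\<lambda>i. replicate ((a # e) ! (i - k0)) (i, True)) [Suc k0..<Suc (k0 + length e)]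
    = map (\<lambda>i. replicate (e ! (i - Suc k0)) (i, True)) [Suc k0..<Suc (k0 + length e)]"
  proof (rule map_cong)
    fix i assume "i \<in> set [Suc k0..<Suc (k0 + length e)]"
    then have "i - k0 = Suc (i - Suc k0)" by auto
    then show "replicate ((a # e) ! (i - k0)) (i, True) = replicate (e ! (i - Suc k0)) (i, True)" by simp
  qed simp
  ultimately show ?case using Cons by (simp del: upt_Suc add: m)
qed

lemma winv_concat: "winv (concat xs) = concat (rev (map winv xs))"
  by (induction xs) auto

lemma winv_rep: "winv (replicate a (i, True)) = replicate a (i, False)"
  by (induction a) (auto simp: lflip_def replicate_append_same)

lemma tp_word_P: "nodes T1 = nodes T2 \<Longrightarrow> tp_word T1 T2 = P T2 @ winv (P T1)"
proof -
  assume n: "nodes T1 = nodes T2"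
  have a: "P T = concat (map (\<lambda>i. replicate (leaf_exps T ! i) (i, True)) [0..<Suc (nodes T)])" for T
    using W_concat[of 0 "leaf_exps T"] by (simp add: P_def le_length)
  show ?thesis unfolding tp_word_def Let_def a n
    by (simp add: winv_concat rev_map[symmetric] comp_def winv_rep)
qed



fun leaves :: "tree \<Rightarrow> nat" where
  "leaves Leaf = 1"
| "leaves (Node l r) = leaves l + leaves r"

lemma leaves_nodes: "leaves t = Suc (nodes t)" by (induction t) auto

fun expand :: "nat \<Rightarrow> tree \<Rightarrow> tree" where
  "expand i Leaf = (if i = 0 then Node Leaf Leaf else Leaf)"
| "expand i (Node l r) = (if i < leaves l then Node (expand i l) r else Node l (expand (i - leaves l) r))"

lemma expand_nodes: "i < leaves t \<Longrightarrow> nodes (expand i t) = Suc (nodes t)"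
  by (induction i t rule: expand.induct) (auto simp: leaves_nodes)

lemma expand_leaves: "i < leaves t \<Longrightarrow> leaves (expand i t) = Suc (leaves t)"
  by (simp add: leaves_nodes expand_nodes)

lemma lp_expand: "i < leaves t \<Longrightarrow>
  left_paths (expand i t) = take i (left_paths t) @ Suc (left_paths t ! i) # 0 # drop (Suc i) (left_paths t)"
proof (induction i t rule: expand.induct)
  case (1 i) then show ?case by simp
next
  case (2 i l r)
  obtain h tl where h: "left_paths l = h # tl" using lp_ne by (cases "left_paths l") auto
  have lt: "length tl = nodes l" using lp_facts[of l] h by simp
  show ?case
  proof (cases "i < leaves l")
    case True
    have IH: "left_paths (expand i l) = take i (h # tl) @ Suc ((h # tl) ! i) # 0 # drop (Suc i) (h # tl)"
      using 2(1) True h by simp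
    show ?thesis
    proof (cases i)
      case 0 then show ?thesis using True IH h by (simp add: Let_def)
    next
      case (Suc j)
      have "j < length tl" using True Suc lt leaves_nodes[of l] by simp
      then show ?thesis using True IH h Suc by (simp add: Let_def nth_append)
    qed
  next
    case False
    have IH: "left_paths (expand (i - leaves l) r) = take (i - leaves l) (left_paths r) @
       Suc (left_paths r ! (i - leaves l)) # 0 # drop (Suc (i - leaves l)) (left_paths r)"
      using 2(2) False 2(3) by simp
    have ll: "leaves l = Suc (length tl)" using lt leaves_nodes[of l] by simp
    obtain j where j: "i = Suc (length tl) + j" using False ll by (metis le_add_diff_inverse not_less)
    have IH': "left_paths (expand j r) = take j (left_paths r) @
       Suc (left_paths r ! j) # 0 # drop (Suc j) (left_paths r)" using IH j ll by simp
    show ?thesis using False IH' h ll j by (simp add: Let_def nth_append)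
  qed
qed

lemma le_expand: "i \<le> nodes T \<Longrightarrow> leaf_exps (expand i T) =
  (if i < nodes T then take i (leaf_exps T) @ Suc (leaf_exps T ! i) # 0 # drop (Suc i) (leaf_exps T)
   else leaf_exps T @ [0])"
proof (induction T arbitrary: i)
  case Leaf then show ?case by simp
next
  case (Node L R)
  have ll: "leaves L = length (left_paths L)" using lp_facts[of L] leaves_nodes[of L] by simp
  show ?case
  proof (cases "i < leaves L")
    case True
    then show ?thesis using lp_expand[OF True] ll leaves_nodes[of L] by (auto simp: nth_append)
  next
    case False
    have i: "i - leaves L \<le> nodes R" using Node.prems False leaves_nodes[of L] by simp
    have e: "Suc (i - leaves L) = Suc i - leaves L" using False by simp
    show ?thesis using Node.IH(2)[OF i] False ll leaves_nodes[of L] e by (auto simp: nth_append)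
  qed
qed

lemma F_rep_pushl: "i < k0 \<Longrightarrow>
  F_eq (replicate a (k0,True) @ [(i,True)]) ((i,True) # replicate a (Suc k0,True))"
proof (induction a)
  case 0 then show ?case by (simp add: F_eq.F_refl)
next
  case (Suc a)
  have "F_eq ((k0,True) # replicate a (k0,True) @ [(i,True)]) ((k0,True) # (i,True) # replicate a (Suc k0,True))"
    using F_cons[OF Suc.IH[OF Suc.prems]] .
  also have "F_eq ((k0,True) # (i,True) # replicate a (Suc k0,True)) ((i,True) # (Suc k0,True) # replicate a (Suc k0,True))"
    using F_app_r[OF F_comm[OF Suc.prems], of "replicate a (Suc k0,True)"] by simp
  finally show ?case by simp
qed

lemma F_W_pushl: "i < k0 \<Longrightarrow> F_eq (W k0 D @ [(i,True)]) ((i,True) # W (Suc k0) D)"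
proof (induction D arbitrary: k0)
  case Nil then show ?case by (simp add: F_eq.F_refl)
next
  case (Cons a D)
  have "W k0 (a # D) @ [(i,True)] = replicate a (k0,True) @ (W (Suc k0) D @ [(i,True)])" by simp
  also have "F_eq \<dots> (replicate a (k0,True) @ (i,True) # W (Suc (Suc k0)) D)"
    using F_app_l[OF Cons.IH] Cons.prems by simp
  also have "F_eq \<dots> ((i,True) # replicate a (Suc k0,True) @ W (Suc (Suc k0)) D)"
    using F_app_r[OF F_rep_pushl[OF Cons.prems], where v = "W (Suc (Suc k0)) D"] by simp
  finally show ?case by simp
qed

lemma F_W_expand: "i < length e \<Longrightarrow>
  F_eq (W 0 (take i e @ Suc (e ! i) # 0 # drop (Suc i) e)) (W 0 e @ [(i,True)])"
proof -
  assume i: "i < length e"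
  let ?D = "drop (Suc i) e"
  have e: "e = take i e @ e ! i # ?D" using id_take_nth_drop[OF i] .
  have lt: "length (take i e) = i" using i by simp
  have m: "min (length e) i = i" using i by simp
  have 1: "W 0 e @ [(i,True)] = W 0 (take i e) @ replicate (e!i) (i,True) @ (W (Suc i) ?D @ [(i,True)])"
  proof -
    have "W 0 e = W 0 (take i e @ e ! i # ?D)" using arg_cong[OF e, of "W 0"] .
    also have "\<dots> = W 0 (take i e) @ replicate (e!i) (i,True) @ W (Suc i) ?D" by (simp add: W_append m)
    finally show ?thesis by simp
  qed
  have 2: "W 0 (take i e @ Suc (e ! i) # 0 # ?D) = W 0 (take i e) @ replicate (e!i) (i,True) @ ((i,True) # W (Suc (Suc i)) ?D)"
    by (simp add: W_append m replicate_append_same[symmetric])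
  show ?thesis unfolding 1 2
    by (rule F_app_l, rule F_app_l, rule F_sym', rule F_W_pushl) simp
qed

lemma F_winv: "F_eq u v \<Longrightarrow> F_eq (winv u) (winv v)"
proof -
  assume a: "F_eq u v"
  have "F_eq (winv u) (winv u @ v @ winv v)"
    using F_app_l[OF F_sym'[OF F_inv_r[of v]], of "winv u"] by simp
  also have "F_eq \<dots> (winv u @ u @ winv v)" using F_app_l[OF F_app_r[OF F_sym'[OF a]]] .
  also have "F_eq \<dots> (winv v)" using F_app_r[OF F_inv_l[of u], of "winv v"] by simp
  finally show ?thesis .
qed

lemma P_expand: "i \<le> nodes T \<Longrightarrow>
  (if i < nodes T then F_eq (P (expand i T)) (P T @ [(i,True)]) else P (expand i T) = P T)"
proof -
  assume i: "i \<le> nodes T"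
  show ?thesis
  proof (cases "i < nodes T")
    case True
    then show ?thesis using le_expand[OF i] F_W_expand[of i "leaf_exps T"] le_length[of T]
      by (simp add: P_def)
  next
    case False
    then show ?thesis using le_expand[OF i] by (simp add: P_def W_append)
  qed
qed

lemma tp_expand: "nodes A = nodes B \<Longrightarrow> i \<le> nodes A \<Longrightarrow>
  F_eq (P (expand i B) @ winv (P (expand i A))) (P B @ winv (P A))"
proof -
  assume n: "nodes A = nodes B" and i: "i \<le> nodes A"
  show ?thesis
  proof (cases "i < nodes A")
    case False
    then show ?thesis using P_expand[OF i] P_expand[of i B] i n by (simp add: F_eq.F_refl)
  next
    case True
    have a: "F_eq (P (expand i A)) (P A @ [(i,True)])" using P_expand[OF i] True by simp
    have b: "F_eq (P (expand i B)) (P B @ [(i,True)])" using P_expand[of i B] True i n by simp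
    have "F_eq (P (expand i B) @ winv (P (expand i A))) ((P B @ [(i,True)]) @ winv (P A @ [(i,True)]))"
      by (rule F_app[OF b F_winv[OF a]])
    also have "(P B @ [(i,True)]) @ winv (P A @ [(i,True)]) = P B @ ((i,True) # lflip (i,True) # winv (P A))"
      by simp
    also have "F_eq \<dots> (P B @ winv (P A))" by (rule F_app_l[OF F_cancel1])
    finally show ?thesis .
  qed
qed



definition shp :: "nat \<Rightarrow> nat \<times> tree \<Rightarrow> nat \<times> tree" where "shp k x = (fst x + k, snd x)"
definition sh :: "nat \<Rightarrow> (nat \<times> tree) set \<Rightarrow> (nat \<times> tree) set" where "sh k X = shp k ` X"

lemma shp_simp[simp]: "shp k (a, t) = (a + k, t)" by (simp add: shp_def)
lemma inj_shp: "inj (shp k)" by (auto simp: inj_def shp_def prod_eq_iff)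
lemma sh_mem: "(a, t) \<in> sh k X \<longleftrightarrow> k \<le> a \<and> (a - k, t) \<in> X"
  by (auto simp: sh_def image_iff shp_def) (metis fst_conv le_add_diff_inverse2 snd_conv)
lemma sh_Un[simp]: "sh k (X \<union> Y) = sh k X \<union> sh k Y" by (simp add: sh_def image_Un)
lemma sh_sh[simp]: "sh k (sh j X) = sh (j + k) X" by (auto simp: sh_def image_image shp_def add.assoc)
lemma sh_0[simp]: "sh 0 X = X" by (simp add: sh_def shp_def)
lemma sh_empty[simp]: "sh k {} = {}" by (simp add: sh_def)
lemma sh_diff: "sh k (X - Y) = sh k X - sh k Y" by (simp add: sh_def image_set_diff[OF inj_shp])
lemma sh_insert: "sh k (insert x X) = insert (shp k x) (sh k X)" by (simp add: sh_def)
lemma finite_sh[simp]: "finite (sh k X) = finite X" by (simp add: sh_def finite_image_iff inj_on_subset[OF inj_shp])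
lemma sh_mono: "X \<subseteq> Y \<Longrightarrow> sh k X \<subseteq> sh k Y" by (auto simp: sh_def)
lemma sh_inj: "sh k X = sh k Y \<Longrightarrow> X = Y" by (simp add: sh_def inj_image_eq_iff[OF inj_shp])

fun subs :: "tree \<Rightarrow> (nat \<times> tree) set" where
  "subs Leaf = {}"
| "subs (Node l r) = insert (0, Node l r) (subs l \<union> sh (leaves l) (subs r))"

fun S :: "tree \<Rightarrow> (nat \<times> tree) set" where
  "S Leaf = {}"
| "S (Node L R) = subs L \<union> sh (leaves L) (S R)"

lemma finite_subs[simp]: "finite (subs t)" by (induction t) auto
lemma finite_S[simp]: "finite (S t)" by (induction t) auto

lemma leaves_pos: "0 < leaves t" by (simp add: leaves_nodes)

lemma subs_bound: "(a, t) \<in> subs s \<Longrightarrow> a + leaves t \<le> leaves s \<and> nodes t \<le> nodes s \<and>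
  (nodes t = nodes s \<longrightarrow> a = 0 \<and> t = s) \<and> t \<noteq> Leaf"
proof (induction s arbitrary: a t)
  case Leaf then show ?case by simp
next
  case (Node l r)
  show ?case
  proof (cases "(a,t) = (0, Node l r)")
    case True then show ?thesis by simp
  next
    case False
    then have "(a,t) \<in> subs l \<or> (a,t) \<in> sh (leaves l) (subs r)" using Node.prems by auto
    then show ?thesis
    proof
      assume "(a,t) \<in> subs l"
      from Node.IH(1)[OF this] show ?thesis by auto
    next
      assume "(a,t) \<in> sh (leaves l) (subs r)"
      then have "leaves l \<le> a" "(a - leaves l, t) \<in> subs r" by (auto simp: sh_mem)
      from Node.IH(2)[OF this(2)] this(1) show ?thesis by auto
    qed
  qed
qed

lemma S_nonleaf: "(a, t) \<in> S T \<Longrightarrow> t \<noteq> Leaf"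
  by (induction T arbitrary: a) (auto simp: sh_mem dest: subs_bound)

lemma subs_self: "t \<noteq> Leaf \<Longrightarrow> (0, t) \<in> subs t" by (cases t) auto

lemma subs_closed: "(k, s) \<in> subs t \<Longrightarrow> sh k (subs s) \<subseteq> subs t"
proof (induction t arbitrary: k s)
  case Leaf then show ?case by simp
next
  case (Node l r)
  consider "(k,s) = (0, Node l r)" | "(k,s) \<in> subs l" | "(k,s) \<in> sh (leaves l) (subs r)" using Node.prems by auto
  then show ?case
  proof cases
    case 1 then show ?thesis by auto
  next
    case 2 then show ?thesis using Node.IH(1) by auto
  next
    case 3
    then have k: "leaves l \<le> k" "(k - leaves l, s) \<in> subs r" by (auto simp: sh_mem)
    have "sh (k - leaves l) (subs s) \<subseteq> subs r" using Node.IH(2)[OF k(2)] .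
    then have "sh (leaves l) (sh (k - leaves l) (subs s)) \<subseteq> sh (leaves l) (subs r)" by (rule sh_mono)
    then show ?thesis using k(1) by auto
  qed
qed

lemma S_closed: "(k, s) \<in> S T \<Longrightarrow> sh k (subs s) \<subseteq> S T"
proof (induction T arbitrary: k)
  case Leaf then show ?case by simp
next
  case (Node L R)
  show ?case
  proof (cases "(k,s) \<in> subs L")
    case True then show ?thesis using subs_closed by fastforce
  next
    case False
    then have k: "leaves L \<le> k" "(k - leaves L, s) \<in> S R" using Node.prems by (auto simp: sh_mem)
    have "sh (leaves L) (sh (k - leaves L) (subs s)) \<subseteq> sh (leaves L) (S R)" by (rule sh_mono[OF Node.IH(2)[OF k(2)]])
    then show ?thesis using k(1) by auto
  qed
qed

lemma rr_S: "rr k T T' \<Longrightarrow> \<exists>x \<in> S T. S T' = S T - {x}"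
proof (induction rule: rr.induct)
  case (rr0 A B C)
  let ?x = "(0::nat, Node A B)"
  have e: "leaves B + leaves A = leaves A + leaves B" by simp
  have 1: "S (Node (Node A B) C) = insert ?x (S (Node A (Node B C)))" by (simp add: e Un_assoc)
  have 2: "?x \<notin> S (Node A (Node B C))"
  proof
    assume "?x \<in> S (Node A (Node B C))"
    then have "?x \<in> subs A \<or> ?x \<in> sh (leaves A) (subs B \<union> sh (leaves B) (S C))" by simp
    then show False
    proof
      assume "?x \<in> subs A" from subs_bound[OF this] show False by simp
    next
      assume "?x \<in> sh (leaves A) (subs B \<union> sh (leaves B) (S C))"
      then show False using leaves_pos[of A] by (simp add: sh_mem)
    qed
  qed
  show ?case using 1 2 by auto
next
  case (rrS k t t' L)
  obtain x where x: "x \<in> S t" "S t' = S t - {x}" using rrS.IH by blast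
  have "shp (leaves L) x \<notin> subs L"
  proof
    assume "shp (leaves L) x \<in> subs L"
    then show False using subs_bound[of "fst x + leaves L" "snd x" L] leaves_pos[of "snd x"] by (simp add: shp_def)
  qed
  then have "S (Node L t') = S (Node L t) - {shp (leaves L) x}"
  proof -
    have "sh (leaves L) (S t - {x}) = sh (leaves L) (S t) - {shp (leaves L) x}" by (simp add: sh_def image_set_diff[OF inj_shp])
    then show ?thesis using x(2) \<open>shp (leaves L) x \<notin> subs L\<close> by (simp only: S.simps) blast
  qed
  moreover have "shp (leaves L) x \<in> S (Node L t)" using x by (simp add: sh_def)
  ultimately show ?case by blast
qed

definition delta :: "tree \<Rightarrow> tree \<Rightarrow> nat" where
  "delta A B = card (S A - S B) + card (S B - S A)"

lemma delta_sym: "delta A B = delta B A" by (simp add: delta_def)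

lemma card_diff_insert_le: "finite Y \<Longrightarrow> card (Y - X) \<le> card (Y - insert x X) + 1"
proof -
  assume f: "finite Y"
  have "Y - X \<subseteq> insert x (Y - insert x X)" by auto
  then have "card (Y - X) \<le> card (insert x (Y - insert x X))" by (rule card_mono[rotated]) (simp add: f)
  also have "\<dots> \<le> card (Y - insert x X) + 1" by (simp add: card_insert_le_m1 card_insert_if f)
  finally show ?thesis .
qed

lemma delta_remove: "x \<in> S B \<Longrightarrow> S B' = S B - {x} \<Longrightarrow> delta A B \<le> delta A B' + 1 \<and> delta A B' \<le> delta A B + 1"
proof -
  assume x: "x \<in> S B" and e: "S B' = S B - {x}"
  have a1: "card (S A - S B) \<le> card (S A - S B')" by (rule card_mono) (auto simp: e)
  have a2: "card (S B - S A) \<le> card (S B' - S A) + 1"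
  proof -
    have "S B - S A \<subseteq> insert x (S B' - S A)" using e by auto
    then have "card (S B - S A) \<le> card (insert x (S B' - S A))" by (rule card_mono[rotated]) simp
    also have "\<dots> \<le> card (S B' - S A) + 1" by (simp add: card_insert_if)
    finally show ?thesis .
  qed
  have b1: "card (S A - S B') \<le> card (S A - S B) + 1"
  proof -
    have "S A - S B' \<subseteq> insert x (S A - S B)" using e by auto
    then have "card (S A - S B') \<le> card (insert x (S A - S B))" by (rule card_mono[rotated]) simp
    also have "\<dots> \<le> card (S A - S B) + 1" by (simp add: card_insert_if)
    finally show ?thesis .
  qed
  have b2: "card (S B' - S A) \<le> card (S B - S A)" by (rule card_mono) (auto simp: e)
  show ?thesis using a1 a2 b1 b2 by (simp add: delta_def)
qed

lemma delta_rr: "rr k B B' \<Longrightarrow> delta A B \<le> delta A B' + 1 \<and> delta A B' \<le> delta A B + 1"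
  using rr_S delta_remove by blast



lemma rr0_S: "S (Node (Node A B) C) = insert (0, Node A B) (S (Node A (Node B C))) \<and>
  (0, Node A B) \<notin> S (Node A (Node B C))"
proof
  have e: "leaves B + leaves A = leaves A + leaves B" by simp
  show "S (Node (Node A B) C) = insert (0, Node A B) (S (Node A (Node B C)))" by (simp add: e Un_assoc)
  show "(0, Node A B) \<notin> S (Node A (Node B C))"
  proof
    assume "(0, Node A B) \<in> S (Node A (Node B C))"
    then have "(0, Node A B) \<in> subs A \<or> (0, Node A B) \<in> sh (leaves A) (subs B \<union> sh (leaves B) (S C))" by simp
    then show False
    proof
      assume "(0, Node A B) \<in> subs A" from subs_bound[OF this] show False by simp
    next
      assume "(0, Node A B) \<in> sh (leaves A) (subs B \<union> sh (leaves B) (S C))"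
      then show False using leaves_pos[of A] by (simp add: sh_mem)
    qed
  qed
qed

lemma rrS_S: "x \<in> S t \<Longrightarrow> S t' = S t - {x} \<Longrightarrow>
  S (Node L t') = S (Node L t) - {shp (leaves L) x} \<and> shp (leaves L) x \<in> S (Node L t)"
proof -
  assume x: "x \<in> S t" "S t' = S t - {x}"
  have n: "shp (leaves L) x \<notin> subs L"
  proof
    assume "shp (leaves L) x \<in> subs L"
    then show False using subs_bound[of "fst x + leaves L" "snd x" L] leaves_pos[of "snd x"] by (simp add: shp_def)
  qed
  have "sh (leaves L) (S t - {x}) = sh (leaves L) (S t) - {shp (leaves L) x}"
    by (simp add: sh_def image_set_diff[OF inj_shp])
  then have "S (Node L t') = S (Node L t) - {shp (leaves L) x}"
    using x(2) n by (simp only: S.simps) blast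
  moreover have "shp (leaves L) x \<in> S (Node L t)" using x by (simp add: sh_def)
  ultimately show ?thesis by blast
qed

lemma S_offset0: "(0, t) \<in> S (Node L R) \<longleftrightarrow> (0, t) \<in> subs L"
  using leaves_pos[of L] by (auto simp: sh_mem)

lemma S_inj: "nodes A = nodes B \<Longrightarrow> S A = S B \<Longrightarrow> A = B"
proof (induction A arbitrary: B)
  case Leaf then show ?case by (cases B) auto
next
  case (Node L R)
  obtain L' R' where B: "B = Node L' R'" using Node.prems by (cases B) auto
  have LL: "L = L'"
  proof (cases "L = Leaf")
    case True
    show ?thesis
    proof (rule ccontr)
      assume "L \<noteq> L'"
      then have "L' \<noteq> Leaf" using True by simp
      then have "(0, L') \<in> S B" using B subs_self by simp
      then have "(0, L') \<in> S (Node L R)" using Node.prems(2) by simp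
      then have "(0, L') \<in> subs L" by (simp only: S_offset0)
      then show False using True by simp
    qed
  next
    case False
    have "(0, L) \<in> S (Node L R)" using False subs_self by simp
    then have "(0, L) \<in> S B" using Node.prems(2) by metis
    then have "(0, L) \<in> S (Node L' R')" using B by simp
    then have 1: "(0, L) \<in> subs L'" by (simp only: S_offset0)
    then have "L' \<noteq> Leaf" by auto
    then have "(0, L') \<in> S (Node L R)" using B Node.prems(2) subs_self by simp
    then have 2: "(0, L') \<in> subs L" by (simp only: S_offset0)
    show ?thesis using subs_bound[OF 1] subs_bound[OF 2] by auto
  qed
  have disj: "subs L \<inter> sh (leaves L) X = {}" for X
  proof -
    have "(a, t) \<notin> sh (leaves L) X" if "(a, t) \<in> subs L" for a t
      using subs_bound[OF that] leaves_pos[of t] by (simp add: sh_mem)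
    then show ?thesis by auto
  qed
  have "sh (leaves L) (S R) = S (Node L R) - subs L" using disj by auto
  also have "\<dots> = S B - subs L" using Node.prems by simp
  also have "\<dots> = sh (leaves L) (S R')" using disj B LL by auto
  finally have "S R = S R'" by (rule sh_inj)
  moreover have "nodes R = nodes R'" using Node.prems B LL by simp
  ultimately have "R = R'" using Node.IH(2) by blast
  then show ?case using B LL by simp
qed

lemma find_rot: "\<not> sh k0 (S A) \<subseteq> S B \<Longrightarrow>
  \<exists>k A' x. rr k A A' \<and> x \<in> S A \<and> shp k0 x \<notin> S B \<and> S A' = S A - {x}"
proof (induction A arbitrary: k0)
  case Leaf then show ?case by simp
next
  case (Node L R)
  show ?case
  proof (cases "sh k0 (subs L) \<subseteq> S B")
    case False
    then obtain P Q where L: "L = Node P Q" by (cases L) auto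
    have "(k0, L) \<notin> S B"
    proof
      assume "(k0, L) \<in> S B"
      from S_closed[OF this] False show False by simp
    qed
    moreover have "rr 0 (Node L R) (Node P (Node Q R))" unfolding L by (rule rr.rr0)
    moreover have "(0, L) \<in> S (Node L R)" "S (Node P (Node Q R)) = S (Node L R) - {(0, L)}"
      using rr0_S[of P Q R] L by auto
    ultimately show ?thesis by fastforce
  next
    case True
    then have "\<not> sh (leaves L + k0) (S R) \<subseteq> S B" using Node.prems by simp
    from Node.IH(2)[OF this] obtain k R' x where
      x: "rr k R R'" "x \<in> S R" "shp (leaves L + k0) x \<notin> S B" "S R' = S R - {x}" by blast
    have "shp k0 (shp (leaves L) x) = shp (leaves L + k0) x" by (simp add: shp_def add.assoc)
    moreover have "rr (Suc k) (Node L R) (Node L R')" using x(1) by (rule rr.rrS)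
    ultimately show ?thesis using rrS_S[OF x(2) x(4), of L] x(3) by metis
  qed
qed

lemma delta_dec: "x \<in> S A \<Longrightarrow> x \<notin> S B \<Longrightarrow> S A' = S A - {x} \<Longrightarrow> delta A' B + 1 = delta A B"
proof -
  assume x: "x \<in> S A" "x \<notin> S B" "S A' = S A - {x}"
  have 1: "S A' - S B = (S A - S B) - {x}" using x by auto
  have 2: "S B - S A' = S B - S A" using x by auto
  have "x \<in> S A - S B" using x by simp
  then have "card ((S A - S B) - {x}) + 1 = card (S A - S B)"
    using card_Suc_Diff1[of "S A - S B" x] by simp
  then show ?thesis using 1 2 by (simp add: delta_def)
qed

lemma path_delta: "nodes A = nodes B \<Longrightarrow> \<exists>m \<le> delta A B. (ra_step ^^ m) A B"
proof (induction "delta A B" arbitrary: A B rule: less_induct)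
  case less
  show ?case
  proof (cases "S A \<subseteq> S B")
    case False
    then obtain k A' x where x: "rr k A A'" "x \<in> S A" "x \<notin> S B" "S A' = S A - {x}"
      using find_rot[of 0 A B] by auto
    have d: "delta A' B + 1 = delta A B" using delta_dec[OF x(2,3,4)] .
    have "nodes A' = nodes B" using rr_nodes[OF x(1)] less.prems by simp
    then obtain m where m: "m \<le> delta A' B" "(ra_step ^^ m) A' B" using less.hyps[of A' B] d by auto
    have "(ra_step ^^ Suc m) A B" using relpowp_Suc_I2[OF rr_ra_step[OF x(1)] m(2)] .
    then show ?thesis using m(1) d by (intro exI[of _ "Suc m"]) auto
  next
    case True
    show ?thesis
    proof (cases "S B \<subseteq> S A")
      case False
      then obtain k B' x where x: "rr k B B'" "x \<in> S B" "x \<notin> S A" "S B' = S B - {x}"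
        using find_rot[of 0 B A] by auto
      have d: "delta A B' + 1 = delta A B" using delta_dec[OF x(2,3,4)] by (simp add: delta_sym)
      have "nodes A = nodes B'" using rr_nodes[OF x(1)] less.prems by simp
      then obtain m where m: "m \<le> delta A B'" "(ra_step ^^ m) A B'" using less.hyps[of A B'] d by auto
      have "(ra_step ^^ Suc m) A B" using relpowp_Suc_I[OF m(2) rr_ra_step'[OF x(1)]] .
      then show ?thesis using m(1) d by (intro exI[of _ "Suc m"]) auto
    next
      case True
      have "S A = S B" using \<open>S A \<subseteq> S B\<close> \<open>S B \<subseteq> S A\<close> by (rule subset_antisym)
      then have "A = B" using S_inj[OF less.prems] by simp
      then show ?thesis by (intro exI[of _ 0]) auto
    qed
  qed
qed



definition E :: "nat \<Rightarrow> nat \<times> tree \<Rightarrow> nat \<times> tree" where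
  "E i x = (if i < fst x then (Suc (fst x), snd x)
            else if i < fst x + leaves (snd x) then (fst x, expand (i - fst x) (snd x)) else x)"

fun col :: "nat \<Rightarrow> tree \<Rightarrow> tree" where
  "col i Leaf = Leaf"
| "col i (Node l r) = (if i = 0 \<and> l = Leaf \<and> r = Leaf then Leaf
     else if i < leaves l then Node (col i l) r else Node l (col (i - leaves l) r))"

lemma expand_ne_leaf: "i < leaves t \<Longrightarrow> expand i t \<noteq> Leaf"
  by (induction i t rule: expand.induct) auto

lemma col_expand: "i < leaves t \<Longrightarrow> col i (expand i t) = t"
proof (induction i t rule: expand.induct)
  case (1 i) then show ?case by simp
next
  case (2 i l r)
  show ?case
  proof (cases "i < leaves l")
    case True
    then show ?thesis using 2 expand_ne_leaf[OF True] expand_leaves[OF True] by simp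
  next
    case False
    have "i - leaves l < leaves r" using 2(3) False by simp
    then show ?thesis using 2 False expand_ne_leaf[of "i - leaves l" r] leaves_pos[of l] by auto
  qed
qed

lemma expand_inj: "i < leaves t \<Longrightarrow> i < leaves s \<Longrightarrow> expand i t = expand i s \<Longrightarrow> t = s"
  by (metis col_expand)

lemma inj_E: "inj (E i)"
proof (rule injI)
  fix x y assume e: "E i x = E i y"
  obtain a t where x: "x = (a, t)" by (cases x)
  obtain b s where y: "y = (b, s)" by (cases y)
  have lt: "\<And>j u. j < leaves u \<Longrightarrow> leaves (expand j u) = Suc (leaves u)" by (rule expand_leaves)
  show "x = y"
  proof (cases "i < a")
    case True
    then show ?thesis using e x y lt by (auto simp: E_def split: if_splits)
  next
    case a: False
    show ?thesis
    proof (cases "i < a + leaves t")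
      case True
      have ex: "E i x = (a, expand (i - a) t)" using a True x by (simp add: E_def)
      have l1: "leaves (expand (i - a) t) = Suc (leaves t)" using True a lt by simp
      show ?thesis
      proof (cases "i < b")
        case True then show ?thesis using e ex y a by (simp add: E_def)
      next
        case b: False
        show ?thesis
        proof (cases "i < b + leaves s")
          case True
          then have "a = b" "expand (i - a) t = expand (i - a) s" using e ex y b by (auto simp: E_def)
          moreover have "i - a < leaves t" "i - a < leaves s" using \<open>i < a + leaves t\<close> a b True calculation(1) by auto
          ultimately show ?thesis using expand_inj x y by simp
        next
          case False
          then have "a = b" "expand (i - a) t = s" using e ex y b by (auto simp: E_def)
          then show ?thesis using False l1 \<open>i < a + leaves t\<close> by simp
        qed
      qed
    next
      case ta: False
      have ex: "E i x = (a, t)" using a ta x by (simp add: E_def)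
      show ?thesis
      proof (cases "i < b")
        case True then show ?thesis using e ex y a by (simp add: E_def)
      next
        case b: False
        show ?thesis
        proof (cases "i < b + leaves s")
          case True
          then have ab: "a = b" and tt: "expand (i - b) s = t" using e ex y b by (auto simp: E_def)
          have "i - b < leaves s" using True b by simp
          then have "leaves t = Suc (leaves s)" using lt tt by metis
          then show ?thesis using ta True ab by simp
        next
          case False
          have "E i y = y" using b False y by (simp add: E_def)
          then show ?thesis using e ex x by simp
        qed
      qed
    qed
  qed
qed

lemma E_sh_le: "k \<le> i \<Longrightarrow> E i ` sh k X = sh k (E (i - k) ` X)"
proof -
  assume k: "k \<le> i"
  have "E i (shp k x) = shp k (E (i - k) x)" for x
    using k by (cases x) (auto simp: E_def add.commute)
  then show ?thesis by (simp add: sh_def image_image)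
qed

lemma E_sh_gt: "i < k \<Longrightarrow> E i ` sh k X = sh (Suc k) X"
proof -
  assume k: "i < k"
  have "E i (shp k x) = shp (Suc k) x" for x
    using k by (cases x) (auto simp: E_def)
  then show ?thesis by (simp add: sh_def image_image)
qed

lemma E_id: "(\<And>a t. (a, t) \<in> X \<Longrightarrow> a + leaves t \<le> i) \<Longrightarrow> E i ` X = X"
proof -
  assume h: "\<And>a t. (a, t) \<in> X \<Longrightarrow> a + leaves t \<le> i"
  have "E i x = x" if "x \<in> X" for x
    using h[of "fst x" "snd x"] that by (auto simp: E_def)
  then show ?thesis by (simp add: image_cong[of X X "E i" id])
qed

abbreviation caret :: tree where "caret \<equiv> Node Leaf Leaf"

lemma subs_expand: "i < leaves t \<Longrightarrow> subs (expand i t) = E i ` subs t \<union> {(i, caret)}"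
proof (induction i t rule: expand.induct)
  case (1 i) then show ?case by simp
next
  case (2 i l r)
  have e0: "E i (0, Node l r) = (0, expand i (Node l r))" using 2(3) by (simp add: E_def)
  have img: "E i ` subs (Node l r) = insert (0, expand i (Node l r)) (E i ` subs l \<union> E i ` sh (leaves l) (subs r))"
    unfolding subs.simps image_insert image_Un e0 ..
  show ?case
  proof (cases "i < leaves l")
    case True
    have IH: "subs (expand i l) = E i ` subs l \<union> {(i, caret)}" using 2(1) True by simp
    have s: "E i ` sh (leaves l) (subs r) = sh (Suc (leaves l)) (subs r)" using E_sh_gt[OF True] .
    have ex: "expand i (Node l r) = Node (expand i l) r" using True by simp
    have "subs (expand i (Node l r)) = insert (0, Node (expand i l) r) (subs (expand i l) \<union> sh (Suc (leaves l)) (subs r))"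
      unfolding ex subs.simps expand_leaves[OF True] ..
    also have "\<dots> = insert (0, Node (expand i l) r) ((E i ` subs l \<union> {(i, caret)}) \<union> sh (Suc (leaves l)) (subs r))"
      unfolding IH ..
    also have "\<dots> = E i ` subs (Node l r) \<union> {(i, caret)}" unfolding img s ex by blast
    finally show ?thesis .
  next
    case False
    have i: "i - leaves l < leaves r" using 2(3) False by simp
    have IH: "subs (expand (i - leaves l) r) = E (i - leaves l) ` subs r \<union> {(i - leaves l, caret)}"
      using 2(2) False i by simp
    have s: "E i ` sh (leaves l) (subs r) = sh (leaves l) (E (i - leaves l) ` subs r)"
      using E_sh_le False by simp
    have id: "E i ` subs l = subs l" using False by (intro E_id) (auto dest: subs_bound)
    have c: "sh (leaves l) {(i - leaves l, caret)} = {(i, caret)}" using False by (simp add: sh_def)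
    have ex: "expand i (Node l r) = Node l (expand (i - leaves l) r)" using False by simp
    have "subs (expand i (Node l r)) = insert (0, Node l (expand (i - leaves l) r)) (subs l \<union> sh (leaves l) (subs (expand (i - leaves l) r)))"
      unfolding ex subs.simps ..
    also have "\<dots> = insert (0, Node l (expand (i - leaves l) r)) (subs l \<union> (sh (leaves l) (E (i - leaves l) ` subs r) \<union> {(i, caret)}))"
      unfolding IH sh_Un c ..
    also have "\<dots> = E i ` subs (Node l r) \<union> {(i, caret)}" unfolding img s ex id by blast
    finally show ?thesis .
  qed
qed

lemma S_expand: "i \<le> nodes T \<Longrightarrow>
  S (expand i T) = E i ` S T \<union> (if i < nodes T then {(i, caret)} else {})"
proof (induction T arbitrary: i)
  case Leaf then show ?case by simp
next
  case (Node L R)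
  have img: "E i ` S (Node L R) = E i ` subs L \<union> E i ` sh (leaves L) (S R)"
    unfolding S.simps image_Un ..
  show ?case
  proof (cases "i < leaves L")
    case True
    have s: "E i ` sh (leaves L) (S R) = sh (Suc (leaves L)) (S R)" using E_sh_gt[OF True] .
    have n: "i < nodes (Node L R)" using True leaves_nodes[of L] by simp
    have ex: "expand i (Node L R) = Node (expand i L) R" using True by simp
    have "S (expand i (Node L R)) = subs (expand i L) \<union> sh (Suc (leaves L)) (S R)"
      unfolding ex S.simps expand_leaves[OF True] ..
    also have "\<dots> = (E i ` subs L \<union> {(i, caret)}) \<union> sh (Suc (leaves L)) (S R)"
      unfolding subs_expand[OF True] ..
    also have "\<dots> = E i ` S (Node L R) \<union> (if i < nodes (Node L R) then {(i, caret)} else {})"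
      unfolding img s using n by auto
    finally show ?thesis .
  next
    case False
    have i: "i - leaves L \<le> nodes R" using Node.prems False leaves_nodes[of L] by simp
    have s: "E i ` sh (leaves L) (S R) = sh (leaves L) (E (i - leaves L) ` S R)"
      using E_sh_le False by simp
    have id: "E i ` subs L = subs L" using False by (intro E_id) (auto dest: subs_bound)
    have iff: "(i - leaves L < nodes R) = (i < nodes (Node L R))" using False leaves_nodes[of L] by auto
    have c: "sh (leaves L) {(i - leaves L, caret)} = {(i, caret)}" using False by (simp add: sh_def)
    have ex: "expand i (Node L R) = Node L (expand (i - leaves L) R)" using False by simp
    have "S (expand i (Node L R)) = subs L \<union> sh (leaves L) (S (expand (i - leaves L) R))"
      unfolding ex S.simps ..
    also have "\<dots> = subs L \<union> sh (leaves L) (E (i - leaves L) ` S R \<union> (if i - leaves L < nodes R then {(i - leaves L, caret)} else {}))"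
      unfolding Node.IH(2)[OF i] ..
    also have "\<dots> = E i ` S (Node L R) \<union> (if i < nodes (Node L R) then {(i, caret)} else {})"
      unfolding img s id iff[symmetric] using c by auto
    finally show ?thesis .
  qed
qed

lemma caret_notin: "(i, caret) \<notin> E i ` S T"
proof
  assume "(i, caret) \<in> E i ` S T"
  then obtain a t where at: "(a, t) \<in> S T" "E i (a, t) = (i, caret)" by auto
  have t: "t \<noteq> Leaf" using S_nonleaf[OF at(1)] .
  show False
  proof (cases "i < a")
    case True then show False using at(2) by (simp add: E_def)
  next
    case False
    show False
    proof (cases "i < a + leaves t")
      case True
      then have "a = i" "expand 0 t = caret" using at(2) False by (auto simp: E_def)
      then show False using t by (cases t) (auto simp: expand_ne_leaf leaves_pos)
    next
      case nt: False
      then show False using at(2) False by (simp add: E_def)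
    qed
  qed
qed

lemma delta_expand: "nodes A = nodes B \<Longrightarrow> i \<le> nodes A \<Longrightarrow> delta (expand i A) (expand i B) = delta A B"
proof -
  assume n: "nodes A = nodes B" and i: "i \<le> nodes A"
  define C where "C = (if i < nodes A then {(i, caret)} else {})"
  have sa: "S (expand i A) = E i ` S A \<union> C" using S_expand[OF i] by (simp add: C_def)
  have sb: "S (expand i B) = E i ` S B \<union> C" using S_expand[of i B] i n by (simp add: C_def)
  have ca: "C \<inter> E i ` S A = {}" "C \<inter> E i ` S B = {}" using caret_notin by (auto simp: C_def)
  have d: "(E i ` X \<union> C) - (E i ` Y \<union> C) = E i ` (X - Y)" if "C \<inter> E i ` X = {}" for X Y
  proof -
    have "(E i ` X \<union> C) - (E i ` Y \<union> C) = E i ` X - E i ` Y" using that by blast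
    also have "\<dots> = E i ` (X - Y)" by (rule image_set_diff[OF inj_E, symmetric])
    finally show ?thesis .
  qed
  have c: "card (E i ` X) = card X" for X by (rule card_image[OF inj_on_subset[OF inj_E]]) simp
  show ?thesis unfolding delta_def sa sb d[OF ca(1)] d[OF ca(2)] c ..
qed



type_synonym strm = "nat \<Rightarrow> bool"

definition scons :: "bool \<Rightarrow> strm \<Rightarrow> strm" where
  "scons b s = (\<lambda>j. case j of 0 \<Rightarrow> b | Suc j' \<Rightarrow> s j')"
definition stl :: "strm \<Rightarrow> strm" where "stl s = (\<lambda>j. s (Suc j))"

lemma scons_0[simp]: "scons b s 0 = b" by (simp add: scons_def)
lemma scons_Suc[simp]: "scons b s (Suc j) = s j" by (simp add: scons_def)
lemma stl_scons[simp]: "stl (scons b s) = s" by (simp add: stl_def scons_def)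
lemma stl_Suc[simp]: "stl s j = s (Suc j)" by (simp add: stl_def)
lemma scons_stl[simp]: "scons b (stl s) = s \<longleftrightarrow> s 0 = b"
proof
  assume "scons b (stl s) = s" then show "s 0 = b" by (metis scons_0)
next
  assume "s 0 = b" then show "scons b (stl s) = s"
    by (intro ext) (simp add: scons_def stl_def split: nat.splits)
qed
lemma scons_eta: "scons (s 0) (stl s) = s" by (rule ext) (simp add: scons_def stl_def split: nat.splits)
lemma scons_1: "scons b s 1 = s 0" by (simp add: scons_def)

lemma scons_stl'[simp]: "scons b (\<lambda>a. s (Suc a)) = s \<longleftrightarrow> s 0 = b"
  using scons_stl[of b s] by (simp add: stl_def)

fun rho :: "nat \<Rightarrow> strm \<Rightarrow> strm" where
  "rho 0 s = (if s 0 then scons True s else if s 1 then scons True (scons False (stl (stl s))) else stl s)"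
| "rho (Suc k) s = (if s 0 then scons True (rho k (stl s)) else s)"

fun sig :: "nat \<Rightarrow> strm \<Rightarrow> strm" where
  "sig 0 s = (if \<not> s 0 then scons False s else if \<not> s 1 then scons False (scons True (stl (stl s))) else stl s)"
| "sig (Suc k) s = (if s 0 then scons True (sig k (stl s)) else s)"

lemma scons2_eta: "scons (s 0) (scons (s 1) (stl (stl s))) = s"
  by (rule ext) (simp add: scons_def stl_def split: nat.splits)

lemma rho_sig: "rho k (sig k s) = s"
proof (induction k arbitrary: s)
  case 0
  show ?case
  proof (cases "s 0")
    case False
    then show ?thesis by (simp add: scons_1)
  next
    case True
    show ?thesis
    proof (cases "s 1")
      case False
      then show ?thesis using True scons2_eta[of s] by (simp add: scons_1)
    next
      case T1: True
      then show ?thesis using True scons_eta[of s] by (simp add: scons_1)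
    qed
  qed
next
  case (Suc k) then show ?case using scons_eta[of s] by auto
qed

lemma sig_rho: "sig k (rho k s) = s"
proof (induction k arbitrary: s)
  case 0
  show ?case
  proof (cases "s 0")
    case True
    then show ?thesis using scons_eta[of s] by (simp add: scons_1)
  next
    case False
    show ?thesis
    proof (cases "s 1")
      case True
      then show ?thesis using False scons2_eta[of s] by (simp add: scons_1)
    next
      case F1: False
      then show ?thesis using False scons_eta[of s] scons_eta[of "stl s"] by (simp add: scons_1)
    qed
  qed
next
  case (Suc k) then show ?case using scons_eta[of s] by auto
qed

lemma rho_rel: "i < n \<Longrightarrow> rho i (rho n s) = rho (Suc n) (rho i s)"
proof (induction i arbitrary: n s)
  case 0
  then obtain m where n: "n = Suc m" by (cases n) auto
  show ?case
  proof (cases "s 0")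
    case True then show ?thesis using n by simp
  next
    case False then show ?thesis using n by (simp add: scons_1)
  qed
next
  case (Suc i)
  then obtain m where n: "n = Suc m" by (cases n) auto
  show ?case using Suc n by simp
qed

definition actl :: "letter \<Rightarrow> strm \<Rightarrow> strm" where
  "actl l = (if snd l then rho (fst l) else sig (fst l))"

fun act :: "letter list \<Rightarrow> strm \<Rightarrow> strm" where
  "act [] = id"
| "act (l # u) = act u \<circ> actl l"

lemma act_append: "act (u @ v) = act v \<circ> act u"
  by (induction u) auto

lemma actl_inv: "actl (i, \<not> b) \<circ> actl (i, b) = id"
  by (rule ext) (simp add: actl_def rho_sig sig_rho)

lemma act_relator: "i < n \<Longrightarrow> act (relator i n) = id"
proof (rule ext)
  fix s assume i: "i < n"
  have "act (relator i n) s = sig (Suc n) (rho i (rho n (sig i s)))"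
    by (simp add: relator_def actl_def)
  also have "\<dots> = sig (Suc n) (rho (Suc n) (rho i (sig i s)))" using rho_rel[OF i] by simp
  also have "\<dots> = s" by (simp add: sig_rho rho_sig)
  finally show "act (relator i n) s = id s" by simp
qed

lemma act_sound: "F_eq u v \<Longrightarrow> act u = act v"
proof (induction rule: F_eq.induct)
  case (F_free u i b v)
  have "act (u @ [(i, b), (i, \<not> b)] @ v) = act v \<circ> (actl (i, \<not> b) \<circ> actl (i, b)) \<circ> act u"
    by (simp add: act_append comp_assoc)
  then show ?case by (simp add: actl_inv act_append)
next
  case (F_rel i n u v)
  have "act (u @ relator i n @ v) = act v \<circ> act (relator i n) \<circ> act u"
    by (simp add: act_append comp_assoc)
  then show ?case using act_relator[OF F_rel] by (simp add: act_append)
qed auto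

fun prep :: "bool list \<Rightarrow> strm \<Rightarrow> strm" where
  "prep [] s = s"
| "prep (b # p) s = scons b (prep p s)"

lemma prep_nth: "prep p w j = (if j < length p then p ! j else w (j - length p))"
  by (induction p arbitrary: j) (auto simp: scons_def nth_Cons split: nat.splits)

lemma prep_inj: "(\<And>w. prep p w = prep q w) \<Longrightarrow> p = q"
proof -
  assume h: "\<And>w. prep p w = prep q w"
  have len: "length p = length q"
  proof (rule ccontr)
    assume "length p \<noteq> length q"
    then consider "length p < length q" | "length q < length p" by linarith
    then show False
    proof cases
      case 1
      let ?w = "\<lambda>_. \<not> q ! length p"
      have "prep p ?w (length p) = prep q ?w (length p)" using h by simp
      then show False using 1 by (simp add: prep_nth)
    next
      case 2
      let ?w = "\<lambda>_. \<not> p ! length q"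
      have "prep p ?w (length q) = prep q ?w (length q)" using h by simp
      then show False using 2 by (simp add: prep_nth)
    qed
  qed
  show ?thesis
  proof (rule nth_equalityI[OF len])
    fix j assume j: "j < length p"
    have "prep p (\<lambda>_. True) j = prep q (\<lambda>_. True) j" using h by simp
    then show "p ! j = q ! j" using j len by (simp add: prep_nth)
  qed
qed

fun addr :: "tree \<Rightarrow> bool list list" where
  "addr Leaf = [[]]"
| "addr (Node l r) = map (Cons False) (addr l) @ map (Cons True) (addr r)"

lemma addr_length: "length (addr t) = leaves t" by (induction t) auto

lemma addr_inj: "addr t = addr s \<Longrightarrow> t = s"
proof (induction t arbitrary: s)
  case Leaf
  have "length (addr s) = 1" using arg_cong[OF Leaf, of length] by simp
  then have "nodes s = 0" using addr_length[of s] leaves_nodes[of s] by simp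
  then show ?case by (cases s) auto
next
  case (Node l r)
  show ?case
  proof (cases s)
    case Leaf
    then show ?thesis using Node.prems addr_length[of "Node l r"] by (auto simp: leaves_nodes)
  next
    case (Node l' r')
    let ?f = "filter (\<lambda>p. p \<noteq> [] \<and> \<not> hd p)"
    let ?g = "filter (\<lambda>p. p \<noteq> [] \<and> hd p)"
    have fF: "?f (map (Cons False) xs) = map (Cons False) xs" for xs by (induction xs) auto
    have fT: "?f (map (Cons True) xs) = []" for xs by (induction xs) auto
    have gF: "?g (map (Cons False) xs) = []" for xs by (induction xs) auto
    have gT: "?g (map (Cons True) xs) = map (Cons True) xs" for xs by (induction xs) auto
    have e: "map (Cons False) (addr l) @ map (Cons True) (addr r) = map (Cons False) (addr l') @ map (Cons True) (addr r')"
      using Node.prems Node by simp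
    have "map (Cons False) (addr l) = map (Cons False) (addr l')" using arg_cong[OF e, of ?f] by (simp only: filter_append fF fT) simp
    then have 1: "addr l = addr l'" by (simp add: inj_map_eq_map inj_def)
    have "map (Cons True) (addr r) = map (Cons True) (addr r')" using arg_cong[OF e, of ?g] by (simp only: filter_append gF gT) simp
    then have 2: "addr r = addr r'" by (simp add: inj_map_eq_map inj_def)
    show ?thesis using Node.IH(1)[OF 1] Node.IH(2)[OF 2] Node by simp
  qed
qed

lemma rr_leaves: "rr k T T' \<Longrightarrow> leaves T' = leaves T"
  using rr_nodes leaves_nodes by simp

lemma rr_addr: "rr k T T' \<Longrightarrow> i < leaves T \<Longrightarrow> rho k (prep (addr T ! i) w) = prep (addr T' ! i) w"
proof (induction arbitrary: i rule: rr.induct)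
  case (rr0 A B C)
  have lA: "length (addr A) = leaves A" and lB: "length (addr B) = leaves B" and lC: "length (addr C) = leaves C"
    by (simp_all add: addr_length)
  consider "i < leaves A" | "leaves A \<le> i \<and> i < leaves A + leaves B" | "leaves A + leaves B \<le> i" by linarith
  then show ?case
  proof cases
    case 1
    then have "addr (Node (Node A B) C) ! i = False # False # addr A ! i"
      "addr (Node A (Node B C)) ! i = False # addr A ! i" using lA lB by (simp_all add: nth_append)
    then show ?thesis by (simp add: scons_1)
  next
    case 2
    then have "i - leaves A < leaves B" "\<not> i < leaves A" by auto
    then have "addr (Node (Node A B) C) ! i = False # True # addr B ! (i - leaves A)"
      "addr (Node A (Node B C)) ! i = True # False # addr B ! (i - leaves A)" using lA lB by (simp_all add: nth_append)
    then show ?thesis by (simp add: scons_1)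
  next
    case 3
    then have "i - (leaves A + leaves B) < leaves C" "\<not> i - leaves A < leaves B" "\<not> i < leaves A"
      using rr0.prems by auto
    then have "addr (Node (Node A B) C) ! i = True # addr C ! (i - (leaves A + leaves B))"
      "addr (Node A (Node B C)) ! i = True # True # addr C ! (i - (leaves A + leaves B))" using lA lB lC by (simp_all add: nth_append diff_diff_add)
    then show ?thesis by (simp add: scons_1)
  qed
next
  case (rrS k t t' L)
  have lL: "length (addr L) = leaves L" by (simp add: addr_length)
  have lt: "length (addr t) = leaves t" "length (addr t') = leaves t" using rr_leaves[OF rrS.hyps] by (simp_all add: addr_length)
  show ?case
  proof (cases "i < leaves L")
    case True then show ?thesis using lL by (simp add: nth_append)
  next
    case False
    then have "i - leaves L < leaves t" using rrS.prems by simp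
    then show ?thesis using False lL lt rrS.IH by (simp add: nth_append)
  qed
qed

fun vine :: "nat \<Rightarrow> tree" where
  "vine 0 = Leaf"
| "vine (Suc n) = Node Leaf (vine n)"

fun al :: "tree \<Rightarrow> nat" where
  "al Leaf = 0"
| "al (Node l r) = Suc (al r)"

lemma vine_nodes: "nodes (vine n) = n" by (induction n) auto
lemma al_le: "al t \<le> nodes t" by (induction t) auto
lemma rr_al: "rr k T T' \<Longrightarrow> al T' = Suc (al T)" by (induction rule: rr.induct) auto

lemma to_vine: "T = vine (nodes T) \<or> (\<exists>k T'. rr k T T')"
proof (induction T)
  case Leaf then show ?case by simp
next
  case (Node L R)
  show ?case
  proof (cases L)
    case (Node A B) then show ?thesis using rr.rr0 by blast
  next
    case Leaf
    from Node.IH(2) show ?thesis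
    proof
      assume "R = vine (nodes R)" then show ?thesis using Leaf by simp
    next
      assume "\<exists>k T'. rr k R T'" then show ?thesis using rr.rrS by blast
    qed
  qed
qed

lemma P_vine: "P (vine n) = []"
proof -
  have "leaf_exps (vine n) = replicate (Suc n) 0" by (induction n) auto
  moreover have "W k0 (replicate m 0) = []" for k0 m by (induction m arbitrary: k0) auto
  ultimately show ?thesis by (simp add: P_def)
qed

lemma act_P: "i < leaves T \<Longrightarrow> act (P T) (prep (addr T ! i) w) = prep (addr (vine (nodes T)) ! i) w"
proof (induction "nodes T - al T" arbitrary: T rule: less_induct)
  case less
  from to_vine[of T] show ?case
  proof
    assume v: "T = vine (nodes T)"
    have "act (P T) = id" by (subst v) (simp add: P_vine)
    then show ?thesis using v by simp
  next
    assume "\<exists>k T'. rr k T T'"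
    then obtain k T' where r: "rr k T T'" by blast
    have "act (P T) = act ((k,True) # P T')" using act_sound[OF P_rot[OF r]] .
    then have "act (P T) (prep (addr T ! i) w) = act (P T') (rho k (prep (addr T ! i) w))"
      by (simp add: actl_def)
    also have "\<dots> = act (P T') (prep (addr T' ! i) w)" using rr_addr[OF r less.prems] by simp
    also have "\<dots> = prep (addr (vine (nodes T')) ! i) w"
    proof (rule less.hyps)
      show "nodes T' - al T' < nodes T - al T" using rr_nodes[OF r] rr_al[OF r] al_le[of T'] by simp
      show "i < leaves T'" using rr_leaves[OF r] less.prems by simp
    qed
    finally show ?thesis using rr_nodes[OF r] by simp
  qed
qed

lemma faithful: "nodes A = nodes B \<Longrightarrow> F_eq [] (P B @ winv (P A)) \<Longrightarrow> A = B"
proof -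
  assume n: "nodes A = nodes B" and e: "F_eq [] (P B @ winv (P A))"
  have 1: "act (winv (P A)) \<circ> act (P B) = id" using act_sound[OF e] by (simp add: act_append)
  have 2: "act (winv (P A)) \<circ> act (P A) = id" using act_sound[OF F_inv_r[of "P A"]] by (simp add: act_append)
  have 3: "act (P A) \<circ> act (winv (P A)) = id" using act_sound[OF F_inv_l[of "P A"]] by (simp add: act_append)
  have eq: "act (P B) = act (P A)"
  proof -
    have "act (P B) = (act (P A) \<circ> act (winv (P A))) \<circ> act (P B)" using 3 by simp
    also have "\<dots> = act (P A) \<circ> (act (winv (P A)) \<circ> act (P B))" by (simp add: comp_assoc)
    also have "\<dots> = act (P A)" using 1 by simp
    finally show ?thesis .
  qed
  have inj: "inj (act (P A))"
  proof (rule injI)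
    fix x y assume "act (P A) x = act (P A) y"
    then have "act (winv (P A)) (act (P A) x) = act (winv (P A)) (act (P A) y)" by simp
    then show "x = y" using fun_cong[OF 2, of x] fun_cong[OF 2, of y] by simp
  qed
  have la: "length (addr A) = length (addr B)" using n by (simp add: addr_length leaves_nodes)
  have "addr A = addr B"
  proof (rule nth_equalityI[OF la])
    fix i assume i: "i < length (addr A)"
    then have iA: "i < leaves A" and iB: "i < leaves B" using la by (simp_all add: addr_length)
    have "prep (addr A ! i) w = prep (addr B ! i) w" for w
    proof -
      have "act (P A) (prep (addr A ! i) w) = act (P A) (prep (addr B ! i) w)"
        using act_P[OF iA, of w] act_P[OF iB, of w] n eq by simp
      then show ?thesis using inj by (simp add: inj_def)
    qed
    then show "addr A ! i = addr B ! i" by (rule prep_inj)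
  qed
  then show ?thesis by (rule addr_inj)
qed



inductive exs :: "tree \<Rightarrow> tree \<Rightarrow> tree \<Rightarrow> tree \<Rightarrow> bool" where
  exs_refl: "exs A B A B"
| exs_step: "exs A B A' B' \<Longrightarrow> i \<le> nodes A' \<Longrightarrow> exs A B (expand i A') (expand i B')"

lemma exs_inv: "exs A B A' B' \<Longrightarrow> nodes A = nodes B \<Longrightarrow>
  nodes A' = nodes B' \<and> delta A' B' = delta A B \<and> F_eq (P B' @ winv (P A')) (P B @ winv (P A))"
proof (induction rule: exs.induct)
  case (exs_refl A B) then show ?case by (simp add: F_eq.F_refl)
next
  case (exs_step A B A' B' i)
  from exs_step.IH[OF exs_step.prems] have h: "nodes A' = nodes B'" "delta A' B' = delta A B"
    "F_eq (P B' @ winv (P A')) (P B @ winv (P A))" by auto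
  have i1: "i < leaves A'" "i < leaves B'" using exs_step.hyps(2) h(1) by (simp_all add: leaves_nodes)
  have "nodes (expand i A') = nodes (expand i B')" using expand_nodes[OF i1(1)] expand_nodes[OF i1(2)] h(1) by simp
  moreover have "delta (expand i A') (expand i B') = delta A B" using delta_expand[OF h(1) exs_step.hyps(2)] h(2) by simp
  moreover have "F_eq (P (expand i B') @ winv (P (expand i A'))) (P B @ winv (P A))"
    using F_trans'[OF tp_expand[OF h(1) exs_step.hyps(2)] h(3)] .
  ultimately show ?case by blast
qed

lemma al_expand_last: "al (expand (nodes t) t) = Suc (al t)"
proof (induction t)
  case Leaf then show ?case by simp
next
  case (Node l r)
  have "\<not> nodes (Node l r) < leaves l" using leaves_nodes[of l] by simp
  moreover have "nodes (Node l r) - leaves l = nodes r" using leaves_nodes[of l] by simp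
  ultimately show ?case using Node.IH(2) by simp
qed

lemma X_arm: "nodes A = nodes B \<Longrightarrow> \<exists>A' B'. exs A B A' B' \<and> m \<le> al B'"
proof (induction m)
  case 0 then show ?case using exs_refl by blast
next
  case (Suc m)
  then obtain A' B' where h: "exs A B A' B'" "m \<le> al B'" by blast
  have n: "nodes A' = nodes B'" using exs_inv[OF h(1) Suc.prems] by simp
  have "exs A B (expand (nodes B') A') (expand (nodes B') B')" using exs_step[OF h(1)] n by simp
  moreover have "Suc m \<le> al (expand (nodes B') B')" using al_expand_last[of B'] h(2) by simp
  ultimately show ?case by blast
qed

lemma X_right: "k < al B \<Longrightarrow> (\<exists>B''. rr k B B'') \<or> (\<exists>i \<le> nodes B. \<exists>B''. rr k (expand i B) B'')"
proof (induction k arbitrary: B)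
  case 0
  then obtain L R where B: "B = Node L R" by (cases B) auto
  show ?case
  proof (cases L)
    case (Node X Y) then show ?thesis using B rr.rr0 by blast
  next
    case Leaf
    have "expand 0 B = Node (Node Leaf Leaf) R" using B Leaf by simp
    then have "rr 0 (expand 0 B) (Node Leaf (Node Leaf R))" using rr.rr0 by simp
    then show ?thesis by blast
  qed
next
  case (Suc k)
  then obtain L R where B: "B = Node L R" by (cases B) auto
  have "k < al R" using Suc.prems B by simp
  from Suc.IH[OF this] show ?case
  proof
    assume "\<exists>B''. rr k R B''" then show ?thesis using B rr.rrS by blast
  next
    assume "\<exists>i \<le> nodes R. \<exists>B''. rr k (expand i R) B''"
    then obtain i B'' where i: "i \<le> nodes R" "rr k (expand i R) B''" by blast
    have "expand (leaves L + i) B = Node L (expand i R)" using B by simp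
    then have "rr (Suc k) (expand (leaves L + i) B) (Node L B'')" using rr.rrS[OF i(2)] by simp
    moreover have "leaves L + i \<le> nodes B" using B i(1) leaves_nodes[of L] by simp
    ultimately show ?thesis by blast
  qed
qed

lemma X_left: "Suc k < al B \<Longrightarrow> \<exists>B''. rr k B'' B"
proof (induction k arbitrary: B)
  case 0
  then obtain L M R where "B = Node L (Node M R)"
    by (cases B; cases "case B of Node _ r \<Rightarrow> r") auto
  then show ?case using rr.rr0 by blast
next
  case (Suc k)
  then obtain L R where B: "B = Node L R" by (cases B) auto
  have "Suc k < al R" using Suc.prems B by simp
  from Suc.IH[OF this] obtain R'' where "rr k R'' R" by blast
  then show ?case using B rr.rrS by blast
qed

lemma sim: "nodes A = nodes B \<Longrightarrow> F_eq u (P B @ winv (P A)) \<Longrightarrow> delta A B \<le> length u"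
proof (induction u arbitrary: A B)
  case Nil
  then have "A = B" using faithful by blast
  then show ?case by (simp add: delta_def)
next
  case (Cons l u)
  obtain k b where l: "l = (k, b)" by (cases l)
  obtain A1 B1 where h1: "exs A B A1 B1" "Suc (Suc k) \<le> al B1" using X_arm[OF Cons.prems(1)] by blast
  have i1: "nodes A1 = nodes B1" "delta A1 B1 = delta A B" "F_eq (P B1 @ winv (P A1)) (P B @ winv (P A))"
    using exs_inv[OF h1(1) Cons.prems(1)] by auto
  have e1: "F_eq (l # u) (P B1 @ winv (P A1))" using F_trans'[OF Cons.prems(2) F_sym'[OF i1(3)]] .
  show ?case
  proof (cases b)
    case True
    have "\<exists>A2 B2 B''. exs A B A2 B2 \<and> rr k B2 B''"
    proof -
      have "k < al B1" using h1(2) by simp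
      from X_right[OF this] show ?thesis
      proof
        assume "\<exists>B''. rr k B1 B''" then show ?thesis using h1(1) by blast
      next
        assume "\<exists>i \<le> nodes B1. \<exists>B''. rr k (expand i B1) B''"
        then obtain i B'' where i: "i \<le> nodes B1" "rr k (expand i B1) B''" by blast
        have "exs A B (expand i A1) (expand i B1)" using exs_step[OF h1(1)] i(1) i1(1) by simp
        then show ?thesis using i(2) by blast
      qed
    qed
    then obtain A2 B2 B'' where h2: "exs A B A2 B2" "rr k B2 B''" by blast
    have i2: "nodes A2 = nodes B2" "delta A2 B2 = delta A B" "F_eq (P B2 @ winv (P A2)) (P B @ winv (P A))"
      using exs_inv[OF h2(1) Cons.prems(1)] by auto
    have e2: "F_eq (l # u) (P B2 @ winv (P A2))" using F_trans'[OF Cons.prems(2) F_sym'[OF i2(3)]] .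
    have "F_eq (P B2 @ winv (P A2)) ((k, True) # P B'' @ winv (P A2))"
      using F_app_r[OF P_rot[OF h2(2)]] by simp
    then have "F_eq (l # u) (l # P B'' @ winv (P A2))" using F_trans'[OF e2] l True by simp
    then have "F_eq u (lflip l # l # P B'' @ winv (P A2))" by (rule F_cons_cancel)
    then have "F_eq u (P B'' @ winv (P A2))" using F_trans'[OF _ F_cancel2] by blast
    moreover have "nodes A2 = nodes B''" using rr_nodes[OF h2(2)] i2(1) by simp
    ultimately have "delta A2 B'' \<le> length u" using Cons.IH by blast
    then show ?thesis using delta_rr[OF h2(2), of A2] i2(2) by simp
  next
    case False
    have "Suc k < al B1" using h1(2) by simp
    from X_left[OF this] obtain B'' where r: "rr k B'' B1" by auto
    have "F_eq (P B1) ((k, False) # P B'')"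
      using F_cons_cancel[OF F_sym'[OF P_rot[OF r]]] by (simp add: lflip_def)
    then have "F_eq (P B1 @ winv (P A1)) ((k, False) # P B'' @ winv (P A1))"
      using F_app_r by fastforce
    then have "F_eq (l # u) (l # P B'' @ winv (P A1))" using F_trans'[OF e1] l False by simp
    then have "F_eq u (lflip l # l # P B'' @ winv (P A1))" by (rule F_cons_cancel)
    then have "F_eq u (P B'' @ winv (P A1))" using F_trans'[OF _ F_cancel2] by blast
    moreover have "nodes A1 = nodes B''" using rr_nodes[OF r] i1(1) by simp
    ultimately have "delta A1 B'' \<le> length u" using Cons.IH by blast
    then show ?thesis using delta_rr[OF r, of A1] i1(2) by simp
  qed
qed

lemma path_word: "(ra_step ^^ m) A B \<Longrightarrow> \<exists>u. length u = m \<and> F_eq u (P B @ winv (P A))"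
proof (induction m arbitrary: B)
  case 0
  then have "A = B" by simp
  then show ?case using F_sym'[OF F_inv_r[of "P A"]] by (intro exI[of _ "[]"]) simp
next
  case (Suc m)
  from Suc.prems obtain C where c: "(ra_step ^^ m) A C" "ra_step C B" by (rule relpowp_Suc_E)
  from Suc.IH[OF c(1)] obtain u where u: "length u = m" "F_eq u (P C @ winv (P A))" by blast
  from ra_step_rr[OF c(2)] show ?case
  proof
    assume "\<exists>k. rr k C B"
    then obtain k where r: "rr k C B" by blast
    have "F_eq (P B) ((k, False) # P C)"
      using F_cons_cancel[OF F_sym'[OF P_rot[OF r]]] by (simp add: lflip_def)
    then have "F_eq (P B @ winv (P A)) ((k, False) # P C @ winv (P A))" using F_app_r by fastforce
    moreover have "F_eq ((k, False) # P C @ winv (P A)) ((k, False) # u)" using F_cons[OF F_sym'[OF u(2)]] .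
    ultimately have "F_eq ((k, False) # u) (P B @ winv (P A))" by (meson F_trans' F_sym')
    then show ?case using u(1) by (intro exI[of _ "(k, False) # u"]) simp
  next
    assume "\<exists>k. rr k B C"
    then obtain k where r: "rr k B C" by blast
    have "F_eq (P B @ winv (P A)) ((k, True) # P C @ winv (P A))" using F_app_r[OF P_rot[OF r]] by simp
    moreover have "F_eq ((k, True) # P C @ winv (P A)) ((k, True) # u)" using F_cons[OF F_sym'[OF u(2)]] .
    ultimately have "F_eq ((k, True) # u) (P B @ winv (P A))" by (meson F_trans' F_sym')
    then show ?case using u(1) by (intro exI[of _ "(k, True) # u"]) simp
  qed
qed

theorem main:
  fixes T1 T2 :: tree
  assumes "nodes T1 = nodes T2"
  shows "d_RA T1 T2 = F_length (tp_word T1 T2)"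
proof -
  have w: "tp_word T1 T2 = P T2 @ winv (P T1)" using tp_word_P[OF assms] .
  obtain m where m: "m \<le> delta T1 T2" "(ra_step ^^ m) T1 T2" using path_delta[OF assms] by blast
  have d1: "d_RA T1 T2 \<le> delta T1 T2" unfolding d_RA_def using Least_le[of "\<lambda>m. (ra_step ^^ m) T1 T2", OF m(2)] m(1) by simp
  have dp: "(ra_step ^^ d_RA T1 T2) T1 T2" unfolding d_RA_def using LeastI[of "\<lambda>m. (ra_step ^^ m) T1 T2", OF m(2)] .
  obtain u where u: "length u = d_RA T1 T2" "F_eq u (tp_word T1 T2)" using path_word[OF dp] w by auto
  have d2: "F_length (tp_word T1 T2) \<le> d_RA T1 T2"
    unfolding F_length_def using u by (intro Least_le) blast
  have "\<exists>u. F_eq u (tp_word T1 T2) \<and> length u = F_length (tp_word T1 T2)"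
    unfolding F_length_def by (rule LeastI_ex) (blast intro: F_eq.F_refl)
  then obtain v where v: "F_eq v (tp_word T1 T2)" "length v = F_length (tp_word T1 T2)" by blast
  have d3: "delta T1 T2 \<le> F_length (tp_word T1 T2)" using sim[OF assms] v w by fastforce
  show ?thesis using d1 d2 d3 by simp
qed


theorem proposition3p7:
  fixes T1 T2 :: tree and n :: nat
  assumes "nodes T1 = n" and "nodes T2 = n"
  shows "d_RA T1 T2 = F_length (tp_word T1 T2)"
  using main assms by simp

end
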